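(* There is a positive constant $C$ such that for infinitely many positive integers $n$, $$ D(n) > 1 - \frac{C}{(\log\log n)^{1-\frac12 e\log 2}}. $$ (Here $1-\frac12 e\log 2\approx 0.057915$.)
   Context: A subset $S\subseteq \mathbb{Z}/n\mathbb{Z}$ is called product-free if there are no $a,b,c\in S$ (not necessarily distinct) with $ab\equiv c \pmod n$. For a positive integer $n$, $D(n)$ denotes the maximum of $|S|/n$ over all product-free subsets $S$ of $\mathbb{Z}/n\mathbb{Z}$. Here $e$ is Euler's number and $\log$ is the natural logarithm. *)

theory Defs
  imports Complex_Main
begin

definition product_free :: "nat \<Rightarrow> nat set \<Rightarrow> bool" where
  "product_free n S \<longleftrightarrow> S \<subseteq> {0..<n} \<and>
     (\<forall>a\<in>S. \<forall>b\<in>S. \<forall>c\<in>S. (a * b) mod n \<noteq> c mod n)"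

definition D :: "nat \<Rightarrow> real" where
  "D n = Max ((\<lambda>S. real (card S) / real n) ` {S. product_free n S})"

end

theory Submission imports Defs "HOL-Analysis.Analysis" "HOL-Number_Theory.Cong" "HOL-Computational_Algebra.Primes"
begin

fun vp :: "nat \<Rightarrow> nat \<Rightarrow> nat \<Rightarrow> nat" where
  "vp p 0 r = 0"
| "vp p (Suc K) r = (if p dvd r then Suc (vp p K (r div p)) else 0)"

lemma vp_dvd: "p ^ vp p K r dvd r"
proof (induction K arbitrary: r)
  case 0 then show ?case by simp
next
  case (Suc K)
  show ?case
  proof (cases "p dvd r")
    case True
    then obtain m where r: "r = p * m" by auto
    show ?thesis
    proof (cases "p = 0")
      case True then show ?thesis using r by simp
    next
      case False
      then have "r div p = m" using r by simp
      moreover have "p ^ vp p K m dvd m" using Suc by simp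
      ultimately show ?thesis using \<open>p dvd r\<close> r by (simp add: mult_dvd_mono)
    qed
  qed simp
qed

lemma vp_le: "vp p K r \<le> K"
  by (induction K arbitrary: r) auto

lemma vp_ge: "j \<le> K \<Longrightarrow> p ^ j dvd r \<Longrightarrow> p > 0 \<Longrightarrow> j \<le> vp p K r"
proof (induction K arbitrary: j r)
  case 0 then show ?case by simp
next
  case (Suc K)
  show ?case
  proof (cases j)
    case 0 then show ?thesis by simp
  next
    case (Suc j')
    from Suc.prems(2) \<open>j = Suc j'\<close> obtain m where m: "r = p * (p ^ j' * m)"
      by (auto simp: dvd_def mult.assoc)
    have pd: "p dvd r" using m by simp
    have "r div p = p ^ j' * m" using m Suc.prems(3) by simp
    then have "j' \<le> vp p K (r div p)"
      using Suc.IH[of j' "r div p"] Suc.prems \<open>j = Suc j'\<close> by simp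
    then show ?thesis using pd \<open>j = Suc j'\<close> by simp
  qed
qed

lemma vp_mod: assumes "p ^ K dvd m" "p > 0" shows "vp p K (r mod m) = vp p K r"
proof (rule antisym)
  have d: "p ^ vp p K r dvd p ^ K" by (simp add: le_imp_power_dvd vp_le)
  show "vp p K r \<le> vp p K (r mod m)"
    by (rule vp_ge[OF vp_le _ assms(2)])
       (meson assms(1) d dvd_trans dvd_mod_iff vp_dvd)
  have d2: "p ^ vp p K (r mod m) dvd p ^ K" by (simp add: le_imp_power_dvd vp_le)
  show "vp p K (r mod m) \<le> vp p K r"
    by (rule vp_ge[OF vp_le _ assms(2)])
       (meson assms(1) d2 dvd_trans dvd_mod_iff vp_dvd)
qed

definition G :: "nat \<Rightarrow> real \<Rightarrow> nat \<Rightarrow> real" where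
  "G p q K = (\<Sum>r<p^K. q ^ vp p K r)"

lemma G_Suc:
  assumes p: "p \<ge> 2"
  shows "G p q (Suc K) = (real p ^ Suc K - real p ^ K) + q * G p q K"
proof -
  let ?I = "{..<p ^ Suc K}"
  let ?D = "{r\<in>?I. p dvd r}" and ?N = "{r\<in>?I. \<not> p dvd r}"
  have IDN: "?I = ?D \<union> ?N" by auto
  have split: "G p q (Suc K) = sum (\<lambda>r. q ^ vp p (Suc K) r) ?D + sum (\<lambda>r. q ^ vp p (Suc K) r) ?N"
    unfolding G_def by (subst IDN, rule sum.union_disjoint) auto
  have Dimg: "?D = (\<lambda>t. p * t) ` {..<p^K}"
  proof
    show "?D \<subseteq> (\<lambda>t. p * t) ` {..<p^K}"
    proof
      fix r assume "r \<in> ?D"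
      then obtain t where t: "r = p * t" and "r < p * p^K" by auto
      then have "t < p^K" using p by simp
      then show "r \<in> (\<lambda>t. p * t) ` {..<p^K}" using t by auto
    qed
  qed (use p in auto)
  have injp: "inj_on (\<lambda>t. p * t) {..<p^K}" using p by (auto simp: inj_on_def)
  have cardD: "card ?D = p ^ K" using Dimg injp by (simp add: card_image)
  have "sum (\<lambda>r. q ^ vp p (Suc K) r) ?D = sum (\<lambda>t. q ^ vp p (Suc K) (p*t)) {..<p^K}"
    using Dimg injp by (simp add: sum.reindex)
  also have "\<dots> = sum (\<lambda>t. q * q ^ vp p K t) {..<p^K}"
    using p by simp
  also have "\<dots> = q * G p q K" by (simp add: G_def sum_distrib_left)
  finally have sD: "sum (\<lambda>r. q ^ vp p (Suc K) r) ?D = q * G p q K" .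
  have "sum (\<lambda>r. q ^ vp p (Suc K) r) ?N = real (card ?N)" by simp
  moreover have "card ?N = p ^ Suc K - p ^ K"
  proof -
    have "card ?I = card ?D + card ?N" by (subst IDN, rule card_Un_disjoint) auto
    then show ?thesis using cardD by simp
  qed
  moreover have "p ^ K \<le> p ^ Suc K" using p by simp
  ultimately have sN: "sum (\<lambda>r. q ^ vp p (Suc K) r) ?N = real p ^ Suc K - real p ^ K"
    by (simp add: of_nat_diff)
  show ?thesis using split sD sN by simp
qed

lemma G_0: "G p q 0 = 1" by (simp add: G_def)

lemma G_upper:
  assumes p: "p \<ge> 2" and q: "1 \<le> q" "q < real p"
  shows "G p q K \<le> real p ^ K * ((real p - 1) / (real p - q))"
proof (induction K)
  case 0 then show ?case using q by (simp add: G_0)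
next
  case (Suc K)
  have "G p q (Suc K) = (real p ^ Suc K - real p ^ K) + q * G p q K" by (rule G_Suc[OF p])
  also have "\<dots> \<le> (real p ^ Suc K - real p ^ K) + q * (real p ^ K * ((real p - 1) / (real p - q)))"
    using Suc q by (intro add_left_mono mult_left_mono) auto
  also have "\<dots> = real p ^ Suc K * ((real p - 1) / (real p - q))"
    using q by (simp add: field_simps)
  finally show ?case .
qed

lemma G_le_pow:
  assumes "0 \<le> q" "q \<le> 1"
  shows "G p q K \<le> real p ^ K"
proof -
  have "G p q K \<le> (\<Sum>r<p^K. 1)" unfolding G_def
    by (rule sum_mono) (use assms in \<open>simp add: power_le_one\<close>)
  then show ?thesis by simp
qed

lemma G_lower:
  assumes p: "p \<ge> 2" and q: "0 \<le> q" "q \<le> 1" and K: "K \<ge> 1"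
  shows "G p q K \<le> real p ^ K * (1 - (1 - q) / real p)"
proof -
  obtain K' where K': "K = Suc K'" using K by (cases K) auto
  have "G p q K = (real p ^ Suc K' - real p ^ K') + q * G p q K'" unfolding K' by (rule G_Suc[OF p])
  also have "\<dots> \<le> (real p ^ Suc K' - real p ^ K') + q * real p ^ K'"
    using G_le_pow[OF q] q by (intro add_left_mono mult_left_mono) auto
  also have "\<dots> = real p ^ K * (1 - (1 - q) / real p)"
    using p unfolding K' by (simp add: field_simps)
  finally show ?thesis .
qed

lemma crt_sum2:
  fixes F :: "nat \<Rightarrow> nat \<Rightarrow> real"
  assumes cop: "coprime a b" and a: "a > 0" and b: "b > 0"
  shows "(\<Sum>x<a*b. F (x mod a) (x mod b)) = (\<Sum>r<a. \<Sum>s<b. F r s)"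
proof -
  let ?h = "\<lambda>x. (x mod a, x mod b)"
  have inj: "inj_on ?h {..<a*b}"
  proof (rule inj_onI)
    fix x y assume x: "x \<in> {..<a*b}" and y: "y \<in> {..<a*b}" and e: "?h x = ?h y"
    then have "[x = y] (mod a*b)"
      by (intro coprime_cong_mult_nat[OF _ _ cop]) (auto simp: cong_def)
    then show "x = y" using x y cong_less_modulus_unique_nat by auto
  qed
  have sub: "?h ` {..<a*b} \<subseteq> {..<a} \<times> {..<b}" using a b by auto
  have "card (?h ` {..<a*b}) = card ({..<a} \<times> {..<b})"
    using card_image[OF inj] by (simp add: card_cartesian_product)
  then have img: "?h ` {..<a*b} = {..<a} \<times> {..<b}"
    using sub by (intro card_subset_eq) auto
  have "(\<Sum>x<a*b. F (x mod a) (x mod b)) = (\<Sum>z\<in>?h ` {..<a*b}. case_prod F z)"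
    using sum.reindex[OF inj, of "case_prod F"] by simp
  also have "\<dots> = (\<Sum>z\<in>{..<a} \<times> {..<b}. case_prod F z)" by (simp only: img)
  also have "\<dots> = (\<Sum>r<a. \<Sum>s<b. F r s)" by (simp add: sum.cartesian_product)
  finally show ?thesis .
qed

lemma crt_sum:
  fixes f :: "nat \<Rightarrow> nat \<Rightarrow> real"
  assumes "finite A" "\<forall>p\<in>A. prime p"
  shows "(\<Sum>x<(\<Prod>p\<in>A. p^K). \<Prod>p\<in>A. f p (x mod p^K)) = (\<Prod>p\<in>A. \<Sum>r<p^K. f p r)"
  using assms
proof (induction A rule: finite_induct)
  case empty then show ?case by simp
next
  case (insert q A)
  let ?m = "\<Prod>p\<in>A. p^K"
  have qp: "prime q" using insert by simp
  have m0: "?m > 0" using insert by (auto intro!: prod_pos simp: prime_gt_0_nat)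
  have q0: "q^K > 0" using qp prime_gt_0_nat by simp
  have cop: "coprime (q^K) ?m"
  proof (rule prod_coprime_right)
    fix p assume "p \<in> A"
    then have "prime p" "p \<noteq> q" using insert by auto
    then have "coprime q p" using qp by (simp add: primes_coprime)
    then show "coprime (q^K) (p^K)" by simp
  qed
  have eq: "\<And>x. (\<Prod>p\<in>A. f p (x mod p^K)) = (\<Prod>p\<in>A. f p ((x mod ?m) mod p^K))"
  proof (rule prod.cong[OF refl])
    fix x p assume "p \<in> A"
    then have "p^K dvd ?m" using insert.hyps(1) by (intro dvd_prodI) auto
    then show "f p (x mod p^K) = f p ((x mod ?m) mod p^K)" by (simp add: mod_mod_cancel)
  qed
  have "(\<Sum>x<(\<Prod>p\<in>insert q A. p^K). \<Prod>p\<in>insert q A. f p (x mod p^K))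
      = (\<Sum>x<q^K * ?m. f q (x mod q^K) * (\<Prod>p\<in>A. f p (x mod p^K)))"
    using insert.hyps by simp
  also have "\<dots> = (\<Sum>x<q^K * ?m. f q (x mod q^K) * (\<Prod>p\<in>A. f p ((x mod ?m) mod p^K)))"
    by (intro sum.cong refl arg_cong2[where f="(*)"] eq)
  also have "\<dots> = (\<Sum>r<q^K. \<Sum>s<?m. f q r * (\<Prod>p\<in>A. f p (s mod p^K)))"
    by (rule crt_sum2[OF cop q0 m0, of "\<lambda>r s. f q r * (\<Prod>p\<in>A. f p (s mod p^K))"])
  also have "\<dots> = (\<Sum>r<q^K. f q r) * (\<Sum>s<?m. \<Prod>p\<in>A. f p (s mod p^K))"
    by (simp add: sum_product)
  also have "\<dots> = (\<Prod>p\<in>insert q A. \<Sum>r<p^K. f p r)"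
    using insert by simp
  finally show ?case .
qed

lemma euler_aux:
  assumes "finite A" "\<forall>p\<in>A. prime p"
  shows "finite M \<Longrightarrow> (\<forall>k\<in>M. k > 0 \<and> (\<forall>p. prime p \<longrightarrow> p dvd k \<longrightarrow> p \<in> A) \<and> (\<forall>p\<in>A. multiplicity p k < J))
    \<Longrightarrow> (\<Sum>k\<in>M. 1 / real k) \<le> (\<Prod>p\<in>A. \<Sum>j<J. (1 / real p) ^ j)"
  using assms
proof (induction A arbitrary: M rule: finite_induct)
  case empty
  have "M \<subseteq> {1}"
  proof
    fix k assume "k \<in> M"
    then have "k > 0" "\<forall>p. prime p \<longrightarrow> \<not> p dvd k" using empty by auto
    then show "k \<in> {1}" using prime_factor_nat[of k] by auto
  qed
  then have "(\<Sum>k\<in>M. 1 / real k) \<le> (\<Sum>k\<in>{1}. 1 / real k)"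
    by (intro sum_mono2) auto
  then show ?case by simp
next
  case (insert q A)
  have qp: "prime q" using insert by simp
  have q1: "q > 1" using qp prime_gt_1_nat by simp
  define Mj where "Mj j = {k\<in>M. multiplicity q k = j}" for j
  define img where "img j = (\<lambda>k. k div q^j) ` Mj j" for j
  have Msum: "(\<Sum>k\<in>M. 1 / real k) = (\<Sum>j<J. \<Sum>k\<in>Mj j. 1 / real k)"
    unfolding Mj_def
    by (rule sum.group[symmetric]) (use insert in auto)
  have bound: "(\<Sum>k\<in>Mj j. 1 / real k) \<le> (1 / real q) ^ j * (\<Prod>p\<in>A. \<Sum>j<J. (1 / real p) ^ j)" for j
  proof -
    have dv: "q^j dvd k" if "k \<in> Mj j" for k
      using that unfolding Mj_def by (auto simp: multiplicity_dvd)
    have kpos: "k > 0" if "k \<in> Mj j" for k using that insert.prems unfolding Mj_def by auto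
    have keq: "k = q^j * (k div q^j)" if "k \<in> Mj j" for k using dv[OF that] by simp
    have inj: "inj_on (\<lambda>k. k div q^j) (Mj j)"
    proof (rule inj_onI)
      fix x y assume a: "x \<in> Mj j" "y \<in> Mj j" "x div q^j = y div q^j"
      have "x = q^j * (x div q^j)" by (rule keq[OF a(1)])
      also have "\<dots> = q^j * (y div q^j)" using a(3) by simp
      also have "\<dots> = y" by (rule keq[OF a(2), symmetric])
      finally show "x = y" .
    qed
    have fin: "finite (Mj j)" using insert.prems unfolding Mj_def by auto
    have props: "\<forall>k'\<in>img j. k' > 0 \<and> (\<forall>p. prime p \<longrightarrow> p dvd k' \<longrightarrow> p \<in> A) \<and> (\<forall>p\<in>A. multiplicity p k' < J)"
    proof
      fix k' assume "k' \<in> img j"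
      then obtain k where k: "k \<in> Mj j" "k' = k div q^j" unfolding img_def by auto
      have kM: "k \<in> M" and mk: "multiplicity q k = j" using k unfolding Mj_def by auto
      have k0: "k > 0" using kpos[OF k(1)] .
      have ke: "k = q^j * k'" using keq[OF k(1)] k(2) by simp
      have k'0: "k' > 0" using k0 ke by (cases "k' = 0") auto
      have "multiplicity q k = j + multiplicity q k'"
        using ke k'0 qp q1
        by (simp add: prime_elem_multiplicity_mult_distrib prime_elem_multiplicity_power_distrib)
      then have "multiplicity q k' = 0" using mk by simp
      then have nq: "\<not> q dvd k'" using multiplicity_eq_zero_iff[of k' q] k'0 q1 by simp
      have dk: "k' dvd k" using ke by simp
      show "k' > 0 \<and> (\<forall>p. prime p \<longrightarrow> p dvd k' \<longrightarrow> p \<in> A) \<and> (\<forall>p\<in>A. multiplicity p k' < J)"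
      proof (intro conjI allI impI ballI)
        show "k' > 0" by fact
      next
        fix p assume "prime p" "p dvd k'"
        then have "p \<in> insert q A" using insert.prems kM dvd_trans[OF _ dk] by blast
        then show "p \<in> A" using nq \<open>p dvd k'\<close> by auto
      next
        fix p assume "p \<in> A"
        have "multiplicity p k' \<le> multiplicity p k" using dk k0 by (intro dvd_imp_multiplicity_le) auto
        also have "\<dots> < J" using insert.prems kM \<open>p \<in> A\<close> by auto
        finally show "multiplicity p k' < J" .
      qed
    qed
    have "(\<Sum>k\<in>Mj j. 1 / real k) = (\<Sum>k\<in>Mj j. (1 / real q) ^ j * (1 / real (k div q^j)))"
    proof (rule sum.cong[OF refl])
      fix k assume "k \<in> Mj j"
      then have "real k = real q ^ j * real (k div q^j)" using keq by (metis of_nat_mult of_nat_power)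
      then show "1 / real k = (1 / real q) ^ j * (1 / real (k div q^j))" by (simp add: power_one_over)
    qed
    also have "\<dots> = (1 / real q) ^ j * (\<Sum>k'\<in>img j. 1 / real k')"
      unfolding img_def by (simp add: sum_distrib_left sum.reindex[OF inj])
    also have "\<dots> \<le> (1 / real q) ^ j * (\<Prod>p\<in>A. \<Sum>j<J. (1 / real p) ^ j)"
    proof (rule mult_left_mono)
      have "finite (img j)" unfolding img_def using fin by simp
      moreover have "\<forall>p\<in>A. prime p" using insert.prems by simp
      ultimately show "(\<Sum>k'\<in>img j. 1 / real k') \<le> (\<Prod>p\<in>A. \<Sum>j<J. (1 / real p) ^ j)"
        using insert.IH props by blast
    qed simp
    finally show ?thesis .
  qed
  have "(\<Sum>k\<in>M. 1 / real k) \<le> (\<Sum>j<J. (1 / real q) ^ j * (\<Prod>p\<in>A. \<Sum>j<J. (1 / real p) ^ j))"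
    unfolding Msum by (rule sum_mono) (rule bound)
  also have "\<dots> = (\<Prod>p\<in>insert q A. \<Sum>j<J. (1 / real p) ^ j)"
    using insert.hyps by (simp add: sum_distrib_right)
  finally show ?case .
qed

lemma sum_inv_sq: "N \<ge> 1 \<Longrightarrow> (\<Sum>k\<in>{2..N}. 1 / real k ^ 2) \<le> 1 - 1 / real N"
proof (induction N rule: dec_induct)
  case base then show ?case by simp
next
  case (step N)
  have "{2..Suc N} = insert (Suc N) {2..N}" using step.hyps by auto
  then have "(\<Sum>k\<in>{2..Suc N}. 1 / real k ^ 2) = 1 / real (Suc N) ^ 2 + (\<Sum>k\<in>{2..N}. 1 / real k ^ 2)"
    by simp
  also have "\<dots> \<le> 1 / real (Suc N) ^ 2 + (1 - 1 / real N)" using step.IH by simp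
  also have "\<dots> \<le> 1 - 1 / real (Suc N)"
  proof -
    have N: "real N \<ge> 1" using step by simp
    have a: "1 / real (Suc N) ^ 2 \<le> 1 / (real N * real (Suc N))"
      by (rule divide_left_mono) (use N in \<open>auto simp: power2_eq_square\<close>)
    have b: "1 / real N - 1 / real (Suc N) = 1 / (real N * real (Suc N))"
      using N by (simp add: field_simps)
    have "1 / real (Suc N) ^ 2 \<le> 1 / real N - 1 / real (Suc N)" using a b by simp
    then show ?thesis by simp
  qed
  finally show ?case .
qed

definition primesto :: "nat \<Rightarrow> nat set" where
  "primesto P = {p. prime p \<and> p \<le> P}"

lemma primesto_finite: "finite (primesto P)" unfolding primesto_def by auto

lemma primesto_sq: assumes "P \<ge> 1" shows "(\<Sum>p\<in>primesto P. 1 / real p ^ 2) \<le> 1"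
proof -
  have "primesto P \<subseteq> {2..P}" unfolding primesto_def using prime_ge_2_nat by auto
  then have "(\<Sum>p\<in>primesto P. 1 / real p ^ 2) \<le> (\<Sum>k\<in>{2..P}. 1 / real k ^ 2)"
    by (intro sum_mono2) auto
  also have "\<dots> \<le> 1 - 1 / real P" using sum_inv_sq assms by blast
  moreover have "1 / real P \<ge> 0" by simp
  ultimately show ?thesis by linarith
qed

lemma mertens_lower:
  assumes P: "P \<ge> 2"
  shows "ln (ln (real P + 1)) \<le> (\<Sum>p\<in>primesto P. 1 / real p) + 2"
proof -
  let ?A = "primesto P"
  have Apr: "\<forall>p\<in>?A. prime p" unfolding primesto_def by auto
  have Ap2: "real p \<ge> 2" if "p \<in> ?A" for p using that prime_ge_2_nat unfolding primesto_def by force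
  have "ln (real P + 1) \<le> harm P" by (rule ln_le_harm)
  also have "(harm P :: real) = (\<Sum>k\<in>{1..P}. 1 / real k)" unfolding harm_def by (simp add: inverse_eq_divide)
  also have "\<dots> \<le> (\<Prod>p\<in>?A. \<Sum>j<P+1. (1 / real p) ^ j)"
  proof (rule euler_aux[OF primesto_finite Apr])
    show "\<forall>k\<in>{1..P}. k > 0 \<and> (\<forall>p. prime p \<longrightarrow> p dvd k \<longrightarrow> p \<in> ?A) \<and> (\<forall>p\<in>?A. multiplicity p k < P + 1)"
    proof (intro ballI conjI allI impI)
      fix k assume k: "k \<in> {1..P}"
      then show "k > 0" by simp
      fix p assume pk: "prime p" "p dvd k"
      have "p \<le> k" using dvd_imp_le[OF pk(2)] k by simp
      then show "p \<in> ?A" using k pk(1) unfolding primesto_def by simp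
    next
      fix k p assume k: "k \<in> {1..P}" and p: "p \<in> ?A"
      have p2: "p \<ge> 2" using p prime_ge_2_nat unfolding primesto_def by auto
      have "p ^ multiplicity p k \<le> k" using k by (intro dvd_imp_le multiplicity_dvd) auto
      moreover have "multiplicity p k < 2 ^ multiplicity p k" by (rule less_exp)
      moreover have "2 ^ multiplicity p k \<le> p ^ multiplicity p k" using p2 by (simp add: power_mono)
      moreover have "k \<le> P" using k by simp
      ultimately show "multiplicity p k < P + 1" by linarith
    qed
  qed simp
  also have "\<dots> \<le> (\<Prod>p\<in>?A. 1 / (1 - 1 / real p))"
  proof (rule prod_mono, rule conjI)
    fix p assume p: "p \<in> ?A"
    have p2: "real p \<ge> 2" using Ap2[OF p] .
    show "0 \<le> (\<Sum>j<P+1. (1 / real p) ^ j)" by (intro sum_nonneg) simp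
    have x: "1 / real p \<noteq> 1" "1 / real p < 1" "0 \<le> 1 / real p" using p2 by auto
    have "(\<Sum>j<P+1. (1 / real p) ^ j) = (1 - (1 / real p) ^ (P+1)) / (1 - 1 / real p)"
      by (simp only: sum_gp_strict if_not_P[OF x(1)])
    also have "\<dots> \<le> 1 / (1 - 1 / real p)"
      using x by (intro divide_right_mono) auto
    finally show "(\<Sum>j<P+1. (1 / real p) ^ j) \<le> 1 / (1 - 1 / real p)" .
  qed
  finally have h: "ln (real P + 1) \<le> (\<Prod>p\<in>?A. 1 / (1 - 1 / real p))" .
  have lpos: "0 < ln (real P + 1)" using P by simp
  have "ln (ln (real P + 1)) \<le> ln (\<Prod>p\<in>?A. 1 / (1 - 1 / real p))"
    using h lpos by (subst ln_le_cancel_iff) (linarith, linarith, simp)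
  also have "\<dots> = (\<Sum>p\<in>?A. ln (1 / (1 - 1 / real p)))"
    by (rule ln_prod[OF primesto_finite]) (use Ap2 in force)
  also have "\<dots> \<le> (\<Sum>p\<in>?A. 1 / real p + 2 * (1 / real p ^ 2))"
  proof (rule sum_mono)
    fix p assume p: "p \<in> ?A"
    have p2: "real p \<ge> 2" using Ap2[OF p] .
    have "- (1 / real p) - 2 * (1 / real p)\<^sup>2 \<le> ln (1 - 1 / real p)"
      using p2 by (intro ln_one_minus_pos_lower_bound) auto
    moreover have "ln (1 / (1 - 1 / real p)) = - ln (1 - 1 / real p)"
      using p2 by (simp add: ln_div)
    ultimately show "ln (1 / (1 - 1 / real p)) \<le> 1 / real p + 2 * (1 / real p ^ 2)"
      by (simp add: power_one_over)
  qed
  also have "\<dots> = (\<Sum>p\<in>?A. 1 / real p) + 2 * (\<Sum>p\<in>?A. 1 / real p ^ 2)"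
    by (simp add: sum.distrib sum_distrib_left)
  also have "\<dots> \<le> (\<Sum>p\<in>?A. 1 / real p) + 2"
    using primesto_sq[of P] P by simp
  finally show ?thesis .
qed

definition wt :: "nat set \<Rightarrow> nat \<Rightarrow> nat \<Rightarrow> nat" where "wt A K x = (\<Sum>p\<in>A. vp p K x)"
definition nn :: "nat set \<Rightarrow> nat \<Rightarrow> nat" where "nn A K = (\<Prod>p\<in>A. p ^ K)"

lemma mgf:
  assumes A: "finite A" "\<forall>p\<in>A. prime p"
  shows "(\<Sum>x<nn A K. q ^ wt A K x) = (\<Prod>p\<in>A. G p q K)"
proof -
  have "(\<Sum>x<nn A K. q ^ wt A K x) = (\<Sum>x<nn A K. \<Prod>p\<in>A. q ^ vp p K (x mod p^K))"
  proof (rule sum.cong[OF refl])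
    fix x
    have "q ^ wt A K x = (\<Prod>p\<in>A. q ^ vp p K x)" unfolding wt_def by (rule power_sum)
    also have "\<dots> = (\<Prod>p\<in>A. q ^ vp p K (x mod p^K))"
    proof (rule prod.cong[OF refl])
      fix p assume "p \<in> A"
      then have "p > 0" using A prime_gt_0_nat by auto
      then show "q ^ vp p K x = q ^ vp p K (x mod p^K)" using vp_mod[of p K "p^K" x] by simp
    qed
    finally show "q ^ wt A K x = (\<Prod>p\<in>A. q ^ vp p K (x mod p^K))" .
  qed
  also have "\<dots> = (\<Prod>p\<in>A. \<Sum>r<p^K. q ^ vp p K r)"
    unfolding nn_def by (rule crt_sum[OF A])
  finally show ?thesis unfolding G_def .
qed

lemma prodfree:
  assumes A: "finite A" "\<forall>p\<in>A. prime p" and K: "4 * a \<le> real K"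
  shows "product_free (nn A K) {x\<in>{..<nn A K}. a < real (wt A K x) \<and> real (wt A K x) \<le> 2 * a}"
    (is "product_free ?n ?S")
proof -
  have "\<forall>x\<in>?S. \<forall>y\<in>?S. \<forall>c\<in>?S. (x * y) mod ?n \<noteq> c mod ?n"
  proof (intro ballI notI)
    fix x y c assume x: "x \<in> ?S" and y: "y \<in> ?S" and c: "c \<in> ?S" and e: "(x * y) mod ?n = c mod ?n"
    have cn: "c mod ?n = c" using c by simp
    have ge: "vp p K x + vp p K y \<le> vp p K c" if p: "p \<in> A" for p
    proof -
      have p0: "p > 0" using p A prime_gt_0_nat by auto
      have dvdn: "p ^ K dvd ?n" unfolding nn_def using p A(1) by (intro dvd_prodI) auto
      have vx: "real (vp p K x) \<le> real (wt A K x)" unfolding wt_def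
        using p A(1) by (simp only: of_nat_le_iff) (rule member_le_sum, auto)
      have vy: "real (vp p K y) \<le> real (wt A K y)" unfolding wt_def
        using p A(1) by (simp only: of_nat_le_iff) (rule member_le_sum, auto)
      have "real (vp p K x + vp p K y) \<le> real K" using vx vy x y K by simp
      then have le: "vp p K x + vp p K y \<le> K" by linarith
      have "p ^ (vp p K x + vp p K y) dvd x * y"
        by (simp add: power_add mult_dvd_mono vp_dvd)
      then have "vp p K x + vp p K y \<le> vp p K (x * y)" using vp_ge le p0 by blast
      also have "\<dots> = vp p K ((x * y) mod ?n)" using vp_mod[OF dvdn p0] by simp
      also have "\<dots> = vp p K c" using e cn by simp
      finally show ?thesis .
    qed
    have "wt A K x + wt A K y \<le> wt A K c" unfolding wt_def sum.distrib[symmetric]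
      by (rule sum_mono) (rule ge)
    then have "real (wt A K x) + real (wt A K y) \<le> real (wt A K c)" by linarith
    then show False using x y c by simp
  qed
  then show ?thesis unfolding product_free_def by auto
qed

lemma markov:
  fixes f :: "nat \<Rightarrow> real"
  assumes "finite X" "Y \<subseteq> X" "\<And>x. x \<in> X \<Longrightarrow> f x \<ge> 0" "\<And>x. x \<in> Y \<Longrightarrow> f x \<ge> c"
  shows "real (card Y) * c \<le> (\<Sum>x\<in>X. f x)"
proof -
  have "real (card Y) * c = (\<Sum>x\<in>Y. c)" by simp
  also have "\<dots> \<le> (\<Sum>x\<in>Y. f x)" using assms(4) by (rule sum_mono)
  also have "\<dots> \<le> (\<Sum>x\<in>X. f x)" using assms by (intro sum_mono2) auto
  finally show ?thesis .
qed

lemma pow_exp: "q > 0 \<Longrightarrow> q ^ m = exp (real m * ln q)"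
  by (simp add: exp_of_nat_mult)

lemma upper_count:
  assumes A: "finite A" "\<forall>p\<in>A. prime p" and q: "1 \<le> q" "q < 2"
  shows "real (card {x\<in>{..<nn A K}. b < real (wt A K x)}) * exp (b * ln q)
    \<le> real (nn A K) * (\<Prod>p\<in>A. (real p - 1) / (real p - q))"
proof -
  have "real (card {x\<in>{..<nn A K}. b < real (wt A K x)}) * exp (b * ln q) \<le> (\<Sum>x<nn A K. q ^ wt A K x)"
  proof (rule markov)
    fix x assume "x \<in> {x\<in>{..<nn A K}. b < real (wt A K x)}"
    then have "b * ln q \<le> real (wt A K x) * ln q" using q by (intro mult_right_mono) auto
    then show "exp (b * ln q) \<le> q ^ wt A K x" using q by (simp add: pow_exp)
  qed (use q in auto)
  also have "\<dots> = (\<Prod>p\<in>A. G p q K)" by (rule mgf[OF A])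
  also have "\<dots> \<le> (\<Prod>p\<in>A. real p ^ K * ((real p - 1) / (real p - q)))"
  proof (rule prod_mono, rule conjI)
    fix p assume "p \<in> A"
    then have p: "p \<ge> 2" using A prime_ge_2_nat by auto
    show "0 \<le> G p q K" unfolding G_def using q by (intro sum_nonneg) auto
    show "G p q K \<le> real p ^ K * ((real p - 1) / (real p - q))"
      by (rule G_upper[OF p q(1)]) (use p q in linarith)
  qed
  also have "\<dots> = real (nn A K) * (\<Prod>p\<in>A. (real p - 1) / (real p - q))"
    by (simp only: nn_def of_nat_prod of_nat_power prod.distrib)
  finally show ?thesis .
qed

lemma lower_count:
  assumes A: "finite A" "\<forall>p\<in>A. prime p" and q: "0 < q" "q \<le> 1" and K: "K \<ge> 1"
  shows "real (card {x\<in>{..<nn A K}. real (wt A K x) \<le> b}) * exp (b * ln q)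
    \<le> real (nn A K) * (\<Prod>p\<in>A. 1 - (1 - q) / real p)"
proof -
  have "real (card {x\<in>{..<nn A K}. real (wt A K x) \<le> b}) * exp (b * ln q) \<le> (\<Sum>x<nn A K. q ^ wt A K x)"
  proof (rule markov)
    fix x assume "x \<in> {x\<in>{..<nn A K}. real (wt A K x) \<le> b}"
    then have "b * ln q \<le> real (wt A K x) * ln q" using q by (intro mult_right_mono_neg) auto
    then show "exp (b * ln q) \<le> q ^ wt A K x" using q by (simp add: pow_exp)
  qed (use q in auto)
  also have "\<dots> = (\<Prod>p\<in>A. G p q K)" by (rule mgf[OF A])
  also have "\<dots> \<le> (\<Prod>p\<in>A. real p ^ K * (1 - (1 - q) / real p))"
  proof (rule prod_mono, rule conjI)
    fix p assume "p \<in> A"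
    then have p: "p \<ge> 2" using A prime_ge_2_nat by auto
    show "0 \<le> G p q K" unfolding G_def using q by (intro sum_nonneg) auto
    show "G p q K \<le> real p ^ K * (1 - (1 - q) / real p)"
      by (rule G_lower[OF p _ q(2) K]) (use q in simp)
  qed
  also have "\<dots> = real (nn A K) * (\<Prod>p\<in>A. 1 - (1 - q) / real p)"
    by (simp only: nn_def of_nat_prod of_nat_power prod.distrib)
  finally show ?thesis .
qed



lemma e_bounds: "271/100 < exp (1::real)" "exp (1::real) < 272/100"
  using e_approx_32 e_less_272 by (auto simp: abs_if split: if_splits)

lemma factor_upper:
  fixes p q :: real
  assumes p: "p \<ge> 2" and q: "1 \<le> q" "q \<le> 136/100"
  shows "(p - 1) / (p - q) \<le> exp ((q - 1) / p + 4 / p ^ 2)"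
proof -
  have pq: "p - q > 0" using p q by linarith
  have "(p - 1) / (p - q) = 1 + (q - 1) / (p - q)" using pq by (simp add: field_simps)
  also have "\<dots> \<le> exp ((q - 1) / (p - q))" by (rule exp_ge_add_one_self)
  also have "(q - 1) / (p - q) \<le> (q - 1) / p + 4 / p ^ 2"
  proof -
    have qq: "(q - 1) * q \<le> (36/100) * (136/100)" using q by (intro mult_mono) auto
    have p0: "p > 0" using p by simp
    have id: "(q - 1) / (p - q) = (q - 1) / p + ((q - 1) * q) / (p * (p - q))"
      using pq p0 by (simp add: field_simps)
    have "p / 4 \<le> p - q" using p q by linarith
    then have pp: "p * p / 4 \<le> p * (p - q)" using p0 mult_left_mono[of "p/4" "p - q" p] by simp
    have "((q - 1) * q) / (p * (p - q)) \<le> 1 / (p * p / 4)"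
      by (rule frac_le) (use qq q p0 pp in auto)
    also have "\<dots> \<le> 4 / p ^ 2" by (simp add: power2_eq_square)
    finally show ?thesis using id by linarith
  qed
  then have "exp ((q - 1) / (p - q)) \<le> exp ((q - 1) / p + 4 / p ^ 2)" by simp
  finally show ?thesis .
qed

lemma prod_upper:
  assumes P: "P \<ge> 1" and q: "1 \<le> q" "q \<le> 136/100"
  shows "(\<Prod>p\<in>primesto P. (real p - 1) / (real p - q)) \<le> exp ((q - 1) * (\<Sum>p\<in>primesto P. 1 / real p) + 4)"
proof -
  have "(\<Prod>p\<in>primesto P. (real p - 1) / (real p - q)) \<le> (\<Prod>p\<in>primesto P. exp ((q - 1) / real p + 4 / real p ^ 2))"
  proof (rule prod_mono, rule conjI)
    fix p assume "p \<in> primesto P"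
    then have p: "real p \<ge> 2" using prime_ge_2_nat unfolding primesto_def by force
    show "0 \<le> (real p - 1) / (real p - q)" using p q by (intro divide_nonneg_nonneg) auto
    show "(real p - 1) / (real p - q) \<le> exp ((q - 1) / real p + 4 / real p ^ 2)"
      by (rule factor_upper[OF p q])
  qed
  also have "\<dots> = exp (\<Sum>p\<in>primesto P. (q - 1) / real p + 4 / real p ^ 2)"
    by (rule exp_sum[OF primesto_finite, symmetric])
  also have "(\<Sum>p\<in>primesto P. (q - 1) / real p + 4 / real p ^ 2)
     = (q - 1) * (\<Sum>p\<in>primesto P. 1 / real p) + 4 * (\<Sum>p\<in>primesto P. 1 / real p ^ 2)"
    by (simp add: sum.distrib sum_distrib_left)
  also have "\<dots> \<le> (q - 1) * (\<Sum>p\<in>primesto P. 1 / real p) + 4"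
    using primesto_sq[OF P] by simp
  finally show ?thesis by simp
qed

lemma prod_lower:
  assumes t: "0 \<le> t" "t \<le> 1"
  shows "(\<Prod>p\<in>primesto P. 1 - (1 - t) / real p) \<le> exp (- (1 - t) * (\<Sum>p\<in>primesto P. 1 / real p))"
proof -
  have "(\<Prod>p\<in>primesto P. 1 - (1 - t) / real p) \<le> (\<Prod>p\<in>primesto P. exp (- ((1 - t) / real p)))"
  proof (rule prod_mono, rule conjI)
    fix p assume "p \<in> primesto P"
    then have p: "real p \<ge> 2" using prime_ge_2_nat unfolding primesto_def by force
    have "(1 - t) / real p \<le> 1" using p t by simp
    then show "0 \<le> 1 - (1 - t) / real p" by simp
    show "1 - (1 - t) / real p \<le> exp (- ((1 - t) / real p))"
      using exp_ge_add_one_self[of "- ((1 - t) / real p)"] by simp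
  qed
  also have "\<dots> = exp (\<Sum>p\<in>primesto P. - ((1 - t) / real p))"
    by (rule exp_sum[OF primesto_finite, symmetric])
  also have "(\<Sum>p\<in>primesto P. - ((1 - t) / real p)) = - (1 - t) * (\<Sum>p\<in>primesto P. 1 / real p)"
    by (simp add: sum_distrib_left sum_negf[symmetric] minus_divide_left)
  finally show ?thesis .
qed

lemma D_ge:
  assumes "product_free n S" "n > 0"
  shows "real (card S) / real n \<le> D n"
proof -
  have fin: "finite {S. product_free n S}"
    by (rule finite_subset[of _ "Pow {0..<n}"]) (auto simp: product_free_def)
  show ?thesis unfolding D_def
    by (rule Max_ge) (use fin assms in auto)
qed

lemma alpha_bounds: "0 < 1 - exp 1 * ln 2 / (2::real)" "1 - exp 1 * ln 2 / (2::real) \<le> 1"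
proof -
  have "exp 1 * ln 2 \<le> (272/100) * (25/36::real)"
    using e_bounds ln2_le_25_over_36 by (intro mult_mono) auto
  then show "0 < 1 - exp 1 * ln 2 / (2::real)" by simp
  show "1 - exp 1 * ln 2 / (2::real) \<le> 1" by simp
qed

lemma main_P:
  assumes P: "P \<ge> 3"
  shows "\<exists>n. n \<ge> 3 \<and> (prime P \<longrightarrow> P \<le> n) \<and>
     1 - D n \<le> ((exp 4 + 1) * exp 2 * 5) / (ln (ln (real n))) powr (1 - exp 1 * ln 2 / 2)"
proof -
  define A where "A = primesto P"
  define \<mu> where "\<mu> = (\<Sum>p\<in>A. 1 / real p)"
  define t where "t = exp 1 / (4::real)"
  define \<alpha> where "\<alpha> = 1 - exp 1 * ln 2 / (2::real)"
  define a where "a = t * \<mu>"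
  define K where "K = nat \<lceil>4 * a\<rceil> + 1"
  define n where "n = nn A K"
  define w where "w = wt A K"
  have Afin: "finite A" and Apr: "\<forall>p\<in>A. prime p" unfolding A_def primesto_def by auto
  have eb: "271/100 < exp (1::real)" "exp (1::real) < 272/100" by (rule e_bounds)+
  have al: "0 < \<alpha>" "\<alpha> \<le> 1" unfolding \<alpha>_def by (rule alpha_bounds)+
  have mu0: "\<mu> \<ge> 0" unfolding \<mu>_def by (intro sum_nonneg) auto
  have t01: "0 < t" "t \<le> 1" unfolding t_def using eb by auto
  have a0: "a \<ge> 0" unfolding a_def using t01 mu0 by simp
  have K1: "K \<ge> 1" unfolding K_def by simp
  have K4: "4 * a \<le> real K" unfolding K_def using a0 by linarith
  have n0: "n > 0" unfolding n_def nn_def using Apr prime_gt_0_nat by (auto intro!: prod_pos)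
  define S where "S = {x\<in>{..<n}. a < real (w x) \<and> real (w x) \<le> 2 * a}"
  define U where "U = {x\<in>{..<n}. 2 * a < real (w x)}"
  define L where "L = {x\<in>{..<n}. real (w x) \<le> a}"
  have pf: "product_free n S" unfolding S_def n_def w_def by (rule prodfree[OF Afin Apr K4])
  have DS: "real (card S) / real n \<le> D n" by (rule D_ge[OF pf n0])
  have cover: "{..<n} \<subseteq> S \<union> U \<union> L" unfolding S_def U_def L_def by auto
  have "n \<le> card (S \<union> U \<union> L)"
    using card_mono[OF _ cover] by (simp add: S_def U_def L_def)
  also have "\<dots> \<le> card S + card U + card L" by (meson card_Un_le add_right_mono le_trans)
  finally have ncard: "real n \<le> real (card S) + real (card U) + real (card L)" by linarith
  define q where "q = exp 1 / (2::real)"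
  have q: "1 \<le> q" "q \<le> 136/100" "q < 2" unfolding q_def using eb by auto
  have lnq: "ln q = 1 - ln 2" unfolding q_def by (simp add: ln_div)
  have "real (card U) * exp ((2 * a) * ln q) \<le> real n * (\<Prod>p\<in>A. (real p - 1) / (real p - q))"
    unfolding U_def n_def w_def by (rule upper_count[OF Afin Apr q(1) q(3)])
  also have "\<dots> \<le> real n * exp ((q - 1) * \<mu> + 4)"
    unfolding A_def \<mu>_def using prod_upper[of P q] P q by (intro mult_left_mono) auto
  finally have "real (card U) \<le> real n * exp ((q - 1) * \<mu> + 4) / exp ((2 * a) * ln q)"
    by (simp add: field_simps)
  also have "\<dots> = real n * exp ((q - 1) * \<mu> + 4 - (2 * a) * ln q)" by (simp add: exp_diff)
  also have "(q - 1) * \<mu> + 4 - (2 * a) * ln q = 4 - \<alpha> * \<mu>"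
    unfolding lnq a_def t_def \<alpha>_def by (simp add: q_def field_simps)
  finally have cU: "real (card U) \<le> real n * (exp 4 * exp (- \<alpha> * \<mu>))" by (simp add: exp_add[symmetric])
  have lnt: "ln t = 1 - 2 * ln 2"
  proof -
    have "ln (4::real) = ln (2 ^ 2)" by simp
    also have "\<dots> = 2 * ln 2" by (simp only: ln_realpow)
    finally show ?thesis unfolding t_def by (simp add: ln_div)
  qed
  have "real (card L) * exp (a * ln t) \<le> real n * (\<Prod>p\<in>A. 1 - (1 - t) / real p)"
    unfolding L_def n_def w_def by (rule lower_count[OF Afin Apr t01 K1])
  also have "\<dots> \<le> real n * exp (- (1 - t) * \<mu>)"
    unfolding A_def \<mu>_def using prod_lower[of t P] t01 by (intro mult_left_mono) auto
  finally have "real (card L) \<le> real n * exp (- (1 - t) * \<mu>) / exp (a * ln t)"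
    by (simp add: field_simps)
  also have "\<dots> = real n * exp (- (1 - t) * \<mu> - a * ln t)" by (simp add: exp_diff)
  also have "- (1 - t) * \<mu> - a * ln t = - \<alpha> * \<mu>"
    unfolding lnt a_def \<alpha>_def by (simp add: t_def field_simps)
  finally have cL: "real (card L) \<le> real n * exp (- \<alpha> * \<mu>)" .
  have Dn: "1 - D n \<le> (exp 4 + 1) * exp (- \<alpha> * \<mu>)"
  proof -
    have "real n - real (card S) \<le> real n * ((exp 4 + 1) * exp (- \<alpha> * \<mu>))"
      using ncard cU cL by (simp add: algebra_simps)
    then have "1 - real (card S) / real n \<le> (exp 4 + 1) * exp (- \<alpha> * \<mu>)"
      using n0 by (simp add: field_simps)
    then show ?thesis using DS by linarith
  qed
  have "{2..<3::nat} = {2}" by auto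
  then have pr3: "prime (3::nat)" by (simp add: prime_nat_iff')
  have three: "3 \<in> A" unfolding A_def primesto_def using P pr3 by simp
  have dvdA: "p ^ K dvd n" if "p \<in> A" for p
    unfolding n_def nn_def using that Afin by (intro dvd_prodI) auto
  have "3 ^ K \<le> n" using dvd_imp_le[OF dvdA[OF three] n0] .
  moreover have "3 \<le> (3::nat) ^ K" using K1 by (simp add: self_le_power)
  ultimately have n3: "n \<ge> 3" by linarith
  have nP: "prime P \<longrightarrow> P \<le> n"
  proof
    assume "prime P"
    then have "P \<in> A" unfolding A_def primesto_def by simp
    then have "P ^ K \<le> n" using dvd_imp_le[OF dvdA n0] by blast
    moreover have "P \<le> P ^ K" using K1 P by (simp add: self_le_power)
    ultimately show "P \<le> n" by linarith
  qed
  have Asub: "A \<subseteq> {1..P}" unfolding A_def primesto_def using prime_ge_1_nat by auto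
  have cardA: "card A \<le> P" using card_mono[OF _ Asub] by simp
  have muP: "\<mu> \<le> real P"
  proof -
    have "\<mu> \<le> (\<Sum>p\<in>A. 1)" unfolding \<mu>_def
    proof (rule sum_mono)
      fix p assume "p \<in> A"
      then have "p \<ge> 1" using Apr prime_ge_1_nat by auto
      then show "1 / real p \<le> 1" by simp
    qed
    then show ?thesis using cardA by simp
  qed
  have KP: "real K \<le> 5 * real P"
  proof -
    have "real K \<le> 4 * a + 2" unfolding K_def using a0 by linarith
    moreover have "a \<le> \<mu>" unfolding a_def using t01 mu0 mult_right_mono[of t 1 \<mu>] by simp
    ultimately show ?thesis using muP P by linarith
  qed
  have "n \<le> (\<Prod>p\<in>A. P ^ K)" unfolding n_def nn_def
  proof (rule prod_mono)
    fix p assume "p \<in> A"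
    then have "p \<le> P" using Asub by auto
    then show "0 \<le> p ^ K \<and> p ^ K \<le> P ^ K" by (simp add: power_mono)
  qed
  also have "\<dots> = P ^ (K * card A)" by (simp only: prod_constant power_mult)
  also have "\<dots> \<le> P ^ (K * P)" using P cardA by (intro power_increasing) auto
  finally have "n \<le> P ^ (K * P)" .
  then have nle: "real n \<le> real P ^ (K * P)" by (simp only: of_nat_power[symmetric] of_nat_le_iff)
  have lnn0: "ln (real n) > 1"
  proof -
    have "exp 1 < real n" using eb n3 by linarith
    then have "ln (exp 1) < ln (real n)" using n0 by (subst ln_less_cancel_iff) auto
    then show ?thesis by simp
  qed
  have "ln (real n) \<le> ln (real P ^ (K * P))" using nle n0 by (subst ln_le_cancel_iff) auto
  also have "\<dots> = real K * real P * ln (real P)" by (simp add: ln_realpow)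
  also have "\<dots> \<le> (5 * real P) * real P * real P"
  proof -
    have lp: "0 \<le> ln (real P)" "ln (real P) \<le> real P" using P ln_le_minus_one[of "real P"] by auto
    show ?thesis using KP lp P by (intro mult_mono) auto
  qed
  also have "\<dots> \<le> real P ^ 5"
  proof -
    have "5 \<le> real P * real P" using P mult_mono[of 3 "real P" 3 "real P"] by auto
    then have "5 * (real P * real P * real P) \<le> (real P * real P) * (real P * real P * real P)"
      by (intro mult_right_mono) auto
    then show ?thesis by (simp add: power_def algebra_simps eval_nat_numeral)
  qed
  finally have lnn: "ln (real n) \<le> real P ^ 5" .
  have llnP: "ln (ln (real n)) \<le> 5 * ln (real P + 1)"
  proof -
    have "ln (ln (real n)) \<le> ln (real P ^ 5)" using lnn lnn0 P by (subst ln_le_cancel_iff) auto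
    also have "\<dots> = 5 * ln (real P)" by (simp add: ln_realpow)
    also have "\<dots> \<le> 5 * ln (real P + 1)" using P by simp
    finally show ?thesis .
  qed
  have X0: "ln (ln (real n)) > 0" using lnn0 by simp
  have mer: "ln (ln (real P + 1)) \<le> \<mu> + 2" unfolding \<mu>_def A_def by (rule mertens_lower) (use P in simp)
  have lP0: "ln (real P + 1) > 0" using P by simp
  have "exp (- \<alpha> * \<mu>) \<le> exp (2 * \<alpha> - \<alpha> * ln (ln (real P + 1)))"
  proof -
    have "\<alpha> * ln (ln (real P + 1)) \<le> \<alpha> * (\<mu> + 2)" using mer al by (intro mult_left_mono) auto
    then show ?thesis by (simp add: algebra_simps)
  qed
  also have "\<dots> = exp (2 * \<alpha>) / (ln (real P + 1)) powr \<alpha>"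
    using lP0 by (simp add: exp_diff powr_def mult.commute)
  also have "\<dots> \<le> exp 2 / (ln (ln (real n)) / 5) powr \<alpha>"
  proof (rule frac_le)
    show "0 \<le> exp (2::real)" by simp
    show "exp (2 * \<alpha>) \<le> exp 2" using al by simp
    show "0 < (ln (ln (real n)) / 5) powr \<alpha>" using X0 by simp
    show "(ln (ln (real n)) / 5) powr \<alpha> \<le> ln (real P + 1) powr \<alpha>"
      using llnP X0 al by (intro powr_mono2) auto
  qed
  also have "\<dots> = exp 2 * 5 powr \<alpha> / (ln (ln (real n))) powr \<alpha>"
    using X0 by (simp add: powr_divide)
  also have "\<dots> \<le> exp 2 * 5 / (ln (ln (real n))) powr \<alpha>"
  proof -
    have "5 powr \<alpha> \<le> 5 powr (1::real)" using al by (intro powr_mono) auto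
    then show ?thesis using X0 by (intro divide_right_mono mult_left_mono) auto
  qed
  finally have "exp (- \<alpha> * \<mu>) \<le> exp 2 * 5 / (ln (ln (real n))) powr \<alpha>" .
  then have "1 - D n \<le> (exp 4 + 1) * (exp 2 * 5 / (ln (ln (real n))) powr \<alpha>)"
    using Dn by (smt (verit) exp_gt_zero mult_left_mono)
  then show ?thesis using n3 nP unfolding \<alpha>_def by (intro exI[of _ n]) (simp add: field_simps)
qed

theorem theorem2p1:
  shows "\<exists>C::real. C > 0 \<and>
    infinite {n::nat. n > 0 \<and>
      D n > 1 - C / (ln (ln (real n))) powr (1 - exp 1 * ln 2 / 2)}"
proof -
  define C0 where "C0 = (exp 4 + 1) * exp 2 * (5::real)"
  have C0: "C0 > 0" unfolding C0_def by (intro mult_pos_pos add_pos_pos) auto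
  have "infinite {n::nat. n > 0 \<and> D n > 1 - (2 * C0) / (ln (ln (real n))) powr (1 - exp 1 * ln 2 / 2)}"
    unfolding infinite_nat_iff_unbounded_le
  proof
    fix m
    obtain P where P: "prime P" "P > max m (3::nat)" using bigger_prime by blast
    obtain n where n: "n \<ge> 3" "P \<le> n"
      and Dn: "1 - D n \<le> C0 / (ln (ln (real n))) powr (1 - exp 1 * ln 2 / 2)"
      using main_P[of P] P unfolding C0_def by auto
    have eb: "exp (1::real) < 272/100" by (rule e_bounds)
    have "exp 1 < real n" using eb n by linarith
    then have "ln (exp 1) < ln (real n)" using n by (subst ln_less_cancel_iff) auto
    then have "ln (real n) > 1" by simp
    then have X: "(ln (ln (real n))) powr (1 - exp 1 * ln 2 / 2) > 0" by simp
    have "C0 / (ln (ln (real n))) powr (1 - exp 1 * ln 2 / 2) < (2 * C0) / (ln (ln (real n))) powr (1 - exp 1 * ln 2 / 2)"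
      using X C0 by (intro divide_strict_right_mono) auto
    then have "D n > 1 - (2 * C0) / (ln (ln (real n))) powr (1 - exp 1 * ln 2 / 2)" using Dn by linarith
    moreover have "n \<ge> m" "n > 0" using n P by auto
    ultimately show "\<exists>n\<ge>m. n \<in> {n::nat. n > 0 \<and> D n > 1 - (2 * C0) / (ln (ln (real n))) powr (1 - exp 1 * ln 2 / 2)}"
      by auto
  qed
  then show ?thesis using C0 by (intro exI[of _ "2 * C0"]) auto
qed

end
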